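(* Let $\mathcal{C}$ and $\mathcal{C}'$ be non-attacking $q$-configurations. Then there exists $N$ such that for every $n\ge N$ with $\mathrm{inloss}_n(\mathcal{C}) = \mathrm{inloss}_n(\mathcal{C}')$ we have $\gamma(\mathcal{C}') - \gamma(\mathcal{C}) = \eta_n(\mathcal{C}') - \eta_n(\mathcal{C})$.
   Context: For $n \in \mathbb{N}$ let $I_n = \{\lfloor (2-n)/2 \rfloor, \ldots, \lfloor n/2 \rfloor\}$ and $\mathcal{B}_n = I_n \times I_n$. A $q$-configuration is a set $\mathcal{C} \subset \mathbb{Z}\times\mathbb{Z}$ with $|\mathcal{C}|=q$. For $Q=(x,y)$, $A(Q) = \{(x+i,y),(x,y+i),(x+i,y+i),(x+i,y-i) : i \in \mathbb{Z}\setminus\{0\}\}$ and $A(\mathcal{C}) = \bigcup_{Q\in\mathcal{C}} A(Q)$. $\mathcal{C}$ is non-attacking if $Q'\notin A(Q)$ for all distinct $Q,Q'\in\mathcal{C}$. The attacking number is $a_{\mathcal{C}}(s) = \#\{Q \in \mathcal{C} : s \in A(Q)\}$ and $\mathrm{inloss}_n(\mathcal{C}) = \sum_{s \in A(\mathcal{C})\cap\mathcal{B}_n} (a_{\mathcal{C}}(s) - 1)$. A Queen at $(x_1,x_2)$ is even if $x_1-x_2\equiv 0\pmod 2$ and odd otherwise; if $\mathcal{C}$ has $e$ even and $o$ odd Queens, $\gamma(\mathcal{C}) = 12\binom{e}{2}+12\binom{o}{2}+10eo$, and $\eta_n(\mathcal{C}) = \sum_{s\in A(\mathcal{C})\cap\mathcal{B}_n}\left[\binom{a_{\mathcal{C}}(s)}{2}-(a_{\mathcal{C}}(s)-1)\right]$.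 *)

theory Defs
  imports Main
begin

type_synonym point = "int \<times> int"

definition I_set :: "nat \<Rightarrow> int set" where
  "I_set n = {(2 - int n) div 2 .. int n div 2}"

definition board :: "nat \<Rightarrow> point set" where
  "board n = I_set n \<times> I_set n"

definition attacks :: "point \<Rightarrow> point set" where
  "attacks Q = {s. \<exists>i::int. i \<noteq> 0 \<and>
      (s = (fst Q + i, snd Q) \<or> s = (fst Q, snd Q + i) \<or>
       s = (fst Q + i, snd Q + i) \<or> s = (fst Q + i, snd Q - i))}"

definition attacked :: "point set \<Rightarrow> point set" where
  "attacked C = (\<Union>Q\<in>C. attacks Q)"

definition q_configuration :: "nat \<Rightarrow> point set \<Rightarrow> bool" where
  "q_configuration q C \<longleftrightarrow> finite C \<and> card C = q"

definition non_attacking :: "point set \<Rightarrow> bool" where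
  "non_attacking C \<longleftrightarrow> (\<forall>Q\<in>C. \<forall>Q'\<in>C. Q \<noteq> Q' \<longrightarrow> Q' \<notin> attacks Q)"

definition attacking_number :: "point set \<Rightarrow> point \<Rightarrow> nat" where
  "attacking_number C s = card {Q \<in> C. s \<in> attacks Q}"

definition inloss :: "nat \<Rightarrow> point set \<Rightarrow> int" where
  "inloss n C = (\<Sum>s \<in> attacked C \<inter> board n. int (attacking_number C s) - 1)"

definition even_queen :: "point \<Rightarrow> bool" where
  "even_queen Q \<longleftrightarrow> (fst Q - snd Q) mod 2 = 0"

definition gamma :: "point set \<Rightarrow> int" where
  "gamma C = (let e = card {Q \<in> C. even_queen Q}; od = card {Q \<in> C. \<not> even_queen Q} in
     12 * int (e choose 2) + 12 * int (od choose 2) + 10 * int e * int od)"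

definition eta :: "nat \<Rightarrow> point set \<Rightarrow> int" where
  "eta n C = (\<Sum>s \<in> attacked C \<inter> board n.
     int (attacking_number C s choose 2) - (int (attacking_number C s) - 1))"

end

theory Submission
  imports Defs
begin

lemma attacks_iff: "s \<in> attacks Q \<longleftrightarrow> s \<noteq> Q \<and> (fst s = fst Q \<or> snd s = snd Q \<or>
   fst s - snd s = fst Q - snd Q \<or> fst s + snd s = fst Q + snd Q)"
proof (cases s; cases Q)
  fix x y a b assume [simp]: "s = (x,y)" "Q = (a,b)"
  show ?thesis
  proof
    assume "s \<in> attacks Q"
    then obtain i where "i \<noteq> 0" "(x,y) = (a+i,b) \<or> (x,y) = (a,b+i) \<or> (x,y) = (a+i,b+i) \<or> (x,y) = (a+i,b-i)"
      by (auto simp: attacks_def)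
    then show "s \<noteq> Q \<and> (fst s = fst Q \<or> snd s = snd Q \<or>
   fst s - snd s = fst Q - snd Q \<or> fst s + snd s = fst Q + snd Q)" by auto
  next
    assume h: "s \<noteq> Q \<and> (fst s = fst Q \<or> snd s = snd Q \<or>
   fst s - snd s = fst Q - snd Q \<or> fst s + snd s = fst Q + snd Q)"
    from h have ne: "x \<noteq> a \<or> y \<noteq> b" by auto
    from h have "x = a \<or> y = b \<or> x - y = a - b \<or> x + y = a + b" by auto
    then have "\<exists>i. i \<noteq> 0 \<and> (x = a + i \<and> y = b \<or> x = a \<and> y = b + i \<or> x = a + i \<and> y = b + i \<or> x = a + i \<and> y = b - i)"
    proof (elim disjE)
      assume "x = a" then show ?thesis using ne by (intro exI[of _ "y - b"]) auto
    next
      assume "y = b" then show ?thesis using ne by (intro exI[of _ "x - a"]) auto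
    next
      assume "x - y = a - b" then show ?thesis using ne by (intro exI[of _ "x - a"]) auto
    next
      assume "x + y = a + b" then show ?thesis using ne by (intro exI[of _ "x - a"]) auto
    qed
    then show "s \<in> attacks Q" unfolding attacks_def by simp
  qed
qed

definition pts10 :: "int \<Rightarrow> int \<Rightarrow> int \<Rightarrow> int \<Rightarrow> (int \<times> int) list" where
  "pts10 a b c d = [(a, d), (c, b), (a, a - c + d), (a, c + d - a), (b + c - d, b), (c + d - b, b), (c, c - a + b), (c, a + b - c), (a - b + d, d), (a + b - d, d)]"

lemma fwd:
  fixes a b c d x y :: int
  assumes ne: "c\<noteq>a" "d\<noteq>b" "c-d\<noteq>a-b" "c+d\<noteq>a+b"
  and h1: "x = a \<or> y = b \<or> x - y = a - b \<or> x + y = a + b" and h2: "x = c \<or> y = d \<or> x - y = c - d \<or> x + y = c + d"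
  shows "(x = a \<and> y = d) \<or> (x = c \<and> y = b) \<or> (x = a \<and> y = a - c + d) \<or> (x = a \<and> y = c + d - a) \<or> (x = b + c - d \<and> y = b) \<or> (x = c + d - b \<and> y = b) \<or> (x = c \<and> y = c - a + b) \<or> (x = c \<and> y = a + b - c) \<or> (x = a - b + d \<and> y = d) \<or> (x = a + b - d \<and> y = d) \<or> (x-y=a-b \<and> x+y=c+d) \<or> (x-y=c-d \<and> x+y=a+b)"
proof -
  have c00: ?thesis if "x = a" "x = c"
  proof -
    have False using that ne by linarith
    then show ?thesis ..
  qed
  have c01: ?thesis if "x = a" "y = d"
  proof -
    have "x = a" "y = d" using that by linarith+
    then show ?thesis by simp
  qed
  have c02: ?thesis if "x = a" "x - y = c - d"
  proof -
    have "x = a" "y = a - c + d" using that by linarith+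
    then show ?thesis by simp
  qed
  have c03: ?thesis if "x = a" "x + y = c + d"
  proof -
    have "x = a" "y = c + d - a" using that by linarith+
    then show ?thesis by simp
  qed
  have c10: ?thesis if "y = b" "x = c"
  proof -
    have "x = c" "y = b" using that by linarith+
    then show ?thesis by simp
  qed
  have c11: ?thesis if "y = b" "y = d"
  proof -
    have False using that ne by linarith
    then show ?thesis ..
  qed
  have c12: ?thesis if "y = b" "x - y = c - d"
  proof -
    have "x = b + c - d" "y = b" using that by linarith+
    then show ?thesis by simp
  qed
  have c13: ?thesis if "y = b" "x + y = c + d"
  proof -
    have "x = c + d - b" "y = b" using that by linarith+
    then show ?thesis by simp
  qed
  have c20: ?thesis if "x - y = a - b" "x = c"
  proof -
    have "x = c" "y = c - a + b" using that by linarith+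
    then show ?thesis by simp
  qed
  have c21: ?thesis if "x - y = a - b" "y = d"
  proof -
    have "x = a - b + d" "y = d" using that by linarith+
    then show ?thesis by simp
  qed
  have c22: ?thesis if "x - y = a - b" "x - y = c - d"
  proof -
    have False using that ne by linarith
    then show ?thesis ..
  qed
  have c23: ?thesis if "x - y = a - b" "x + y = c + d"
    using that by blast
  have c30: ?thesis if "x + y = a + b" "x = c"
  proof -
    have "x = c" "y = a + b - c" using that by linarith+
    then show ?thesis by simp
  qed
  have c31: ?thesis if "x + y = a + b" "y = d"
  proof -
    have "x = a + b - d" "y = d" using that by linarith+
    then show ?thesis by simp
  qed
  have c32: ?thesis if "x + y = a + b" "x - y = c - d"
    using that by blast
  have c33: ?thesis if "x + y = a + b" "x + y = c + d"
  proof -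
    have False using that ne by linarith
    then show ?thesis ..
  qed
  show ?thesis using h1
  proof (elim disjE)
    assume A: "x = a"
    show ?thesis using h2
    proof (elim disjE)
      assume B: "x = c"
      show ?thesis using A B by (rule c00)
    next
      assume B: "y = d"
      show ?thesis using A B by (rule c01)
    next
      assume B: "x - y = c - d"
      show ?thesis using A B by (rule c02)
    next
      assume B: "x + y = c + d"
      show ?thesis using A B by (rule c03)
    qed
  next
    assume A: "y = b"
    show ?thesis using h2
    proof (elim disjE)
      assume B: "x = c"
      show ?thesis using A B by (rule c10)
    next
      assume B: "y = d"
      show ?thesis using A B by (rule c11)
    next
      assume B: "x - y = c - d"
      show ?thesis using A B by (rule c12)
    next
      assume B: "x + y = c + d"
      show ?thesis using A B by (rule c13)
    qed
  next
    assume A: "x - y = a - b"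
    show ?thesis using h2
    proof (elim disjE)
      assume B: "x = c"
      show ?thesis using A B by (rule c20)
    next
      assume B: "y = d"
      show ?thesis using A B by (rule c21)
    next
      assume B: "x - y = c - d"
      show ?thesis using A B by (rule c22)
    next
      assume B: "x + y = c + d"
      show ?thesis using A B by (rule c23)
    qed
  next
    assume A: "x + y = a + b"
    show ?thesis using h2
    proof (elim disjE)
      assume B: "x = c"
      show ?thesis using A B by (rule c30)
    next
      assume B: "y = d"
      show ?thesis using A B by (rule c31)
    next
      assume B: "x - y = c - d"
      show ?thesis using A B by (rule c32)
    next
      assume B: "x + y = c + d"
      show ?thesis using A B by (rule c33)
    qed
  qed
qed

lemma dist10:
  fixes a b c d :: int
  assumes ne: "c\<noteq>a" "d\<noteq>b" "c-d\<noteq>a-b" "c+d\<noteq>a+b"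
  shows "distinct (pts10 a b c d)"
  unfolding pts10_def using ne by (simp; linarith)

lemma dist12:
  fixes a b c d k :: int
  assumes ne: "c\<noteq>a" "d\<noteq>b" "c-d\<noteq>a-b" "c+d\<noteq>a+b" and k: "a-b+c+d = 2*k"
  shows "distinct (pts10 a b c d @ [(k, k-a+b), (k+b-d, a+d-k)])"
  unfolding pts10_def using ne k by (simp; linarith)

lemma attacks_l1: "x = a \<Longrightarrow> x \<noteq> a \<or> y \<noteq> b \<Longrightarrow> (x,y) \<in> attacks (a,b)" by (simp add: attacks_iff)
lemma attacks_l2: "y = b \<Longrightarrow> x \<noteq> a \<or> y \<noteq> b \<Longrightarrow> (x,y) \<in> attacks (a,b)" by (simp add: attacks_iff)
lemma attacks_l3: "x - y = a - b \<Longrightarrow> x \<noteq> a \<or> y \<noteq> b \<Longrightarrow> (x,y) \<in> attacks (a,b)" by (simp add: attacks_iff)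
lemma attacks_l4: "x + y = a + b \<Longrightarrow> x \<noteq> a \<or> y \<noteq> b \<Longrightarrow> (x,y) \<in> attacks (a,b)" by (simp add: attacks_iff)

lemma rev10:
  fixes a b c d :: int
  assumes ne: "c\<noteq>a" "d\<noteq>b" "c-d\<noteq>a-b" "c+d\<noteq>a+b"
  assumes p: "p \<in> set (pts10 a b c d)"
  shows "p \<in> attacks (a,b) \<inter> attacks (c,d)"
proof -
  have p0: "(a, d) \<in> attacks (a,b)" by (rule attacks_l1; use ne in linarith)
  have q0: "(a, d) \<in> attacks (c,d)" by (rule attacks_l2; use ne in linarith)
  have p1: "(c, b) \<in> attacks (a,b)" by (rule attacks_l2; use ne in linarith)
  have q1: "(c, b) \<in> attacks (c,d)" by (rule attacks_l1; use ne in linarith)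
  have p2: "(a, a - c + d) \<in> attacks (a,b)" by (rule attacks_l1; use ne in linarith)
  have q2: "(a, a - c + d) \<in> attacks (c,d)" by (rule attacks_l3; use ne in linarith)
  have p3: "(a, c + d - a) \<in> attacks (a,b)" by (rule attacks_l1; use ne in linarith)
  have q3: "(a, c + d - a) \<in> attacks (c,d)" by (rule attacks_l4; use ne in linarith)
  have p4: "(b + c - d, b) \<in> attacks (a,b)" by (rule attacks_l2; use ne in linarith)
  have q4: "(b + c - d, b) \<in> attacks (c,d)" by (rule attacks_l3; use ne in linarith)
  have p5: "(c + d - b, b) \<in> attacks (a,b)" by (rule attacks_l2; use ne in linarith)
  have q5: "(c + d - b, b) \<in> attacks (c,d)" by (rule attacks_l4; use ne in linarith)
  have p6: "(c, c - a + b) \<in> attacks (a,b)" by (rule attacks_l3; use ne in linarith)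
  have q6: "(c, c - a + b) \<in> attacks (c,d)" by (rule attacks_l1; use ne in linarith)
  have p7: "(c, a + b - c) \<in> attacks (a,b)" by (rule attacks_l4; use ne in linarith)
  have q7: "(c, a + b - c) \<in> attacks (c,d)" by (rule attacks_l1; use ne in linarith)
  have p8: "(a - b + d, d) \<in> attacks (a,b)" by (rule attacks_l3; use ne in linarith)
  have q8: "(a - b + d, d) \<in> attacks (c,d)" by (rule attacks_l2; use ne in linarith)
  have p9: "(a + b - d, d) \<in> attacks (a,b)" by (rule attacks_l4; use ne in linarith)
  have q9: "(a + b - d, d) \<in> attacks (c,d)" by (rule attacks_l2; use ne in linarith)
  show ?thesis using p unfolding pts10_def set_simps insert_iff empty_iff Int_iff using p0 q0 p1 q1 p2 q2 p3 q3 p4 q4 p5 q5 p6 q6 p7 q7 p8 q8 p9 q9 by (elim disjE; simp only:; blast)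
qed

lemma rev_diag:
  fixes a b c d x y :: int
  assumes ne: "c\<noteq>a" "d\<noteq>b" "c-d\<noteq>a-b" "c+d\<noteq>a+b"
  assumes "x - y = a - b" "x + y = c + d"
  shows "(x,y) \<in> attacks (a,b) \<inter> attacks (c,d)"
proof -
  have "(x,y) \<in> attacks (a,b)" by (rule attacks_l3; use assms in linarith)
  moreover have "(x,y) \<in> attacks (c,d)" by (rule attacks_l4; use assms in linarith)
  ultimately show ?thesis by simp
qed

lemma rev_diag2:
  fixes a b c d x y :: int
  assumes ne: "c\<noteq>a" "d\<noteq>b" "c-d\<noteq>a-b" "c+d\<noteq>a+b"
  assumes "x - y = c - d" "x + y = a + b"
  shows "(x,y) \<in> attacks (a,b) \<inter> attacks (c,d)"
proof -
  have "(x,y) \<in> attacks (a,b)" by (rule attacks_l4; use assms in linarith)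
  moreover have "(x,y) \<in> attacks (c,d)" by (rule attacks_l3; use assms in linarith)
  ultimately show ?thesis by simp
qed

lemma mem10: "((x::int),(y::int)) \<in> set (pts10 a b c d) \<longleftrightarrow> (x = a \<and> y = d) \<or> (x = c \<and> y = b) \<or> (x = a \<and> y = a - c + d) \<or> (x = a \<and> y = c + d - a) \<or> (x = b + c - d \<and> y = b) \<or> (x = c + d - b \<and> y = b) \<or> (x = c \<and> y = c - a + b) \<or> (x = c \<and> y = a + b - c) \<or> (x = a - b + d \<and> y = d) \<or> (x = a + b - d \<and> y = d)"
  unfolding pts10_def by simp

lemma inter_set:
  fixes a b c d :: int
  assumes ne: "c\<noteq>a" "d\<noteq>b" "c-d\<noteq>a-b" "c+d\<noteq>a+b"
  shows "attacks (a,b) \<inter> attacks (c,d) = set (pts10 a b c d) \<union> {p. fst p - snd p = a-b \<and> fst p + snd p = c+d} \<union> {p. fst p - snd p = c-d \<and> fst p + snd p = a+b}"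
proof (rule set_eqI)
  fix p :: "int \<times> int"
  obtain x y where p: "p = (x,y)" by force
  show "p \<in> attacks (a,b) \<inter> attacks (c,d) \<longleftrightarrow> p \<in> set (pts10 a b c d) \<union> {p. fst p - snd p = a-b \<and> fst p + snd p = c+d} \<union> {p. fst p - snd p = c-d \<and> fst p + snd p = a+b}"
  proof
    assume "p \<in> attacks (a,b) \<inter> attacks (c,d)"
    then have "(x,y) \<in> attacks (a,b)" "(x,y) \<in> attacks (c,d)" using p by auto
    then have h1: "x = a \<or> y = b \<or> x - y = a - b \<or> x + y = a + b" and h2: "x = c \<or> y = d \<or> x - y = c - d \<or> x + y = c + d"
      unfolding attacks_iff by auto
    from fwd[OF ne h1 h2] show "p \<in> set (pts10 a b c d) \<union> {p. fst p - snd p = a-b \<and> fst p + snd p = c+d} \<union> {p. fst p - snd p = c-d \<and> fst p + snd p = a+b}"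
      unfolding p Un_iff mem10 mem_Collect_eq fst_conv snd_conv by blast
  next
    assume "p \<in> set (pts10 a b c d) \<union> {p. fst p - snd p = a-b \<and> fst p + snd p = c+d} \<union> {p. fst p - snd p = c-d \<and> fst p + snd p = a+b}"
    then show "p \<in> attacks (a,b) \<inter> attacks (c,d)"
      unfolding Un_iff mem_Collect_eq using rev10[OF ne] rev_diag[OF ne] rev_diag2[OF ne] p by auto
  qed
qed

lemma card_inter:
  fixes a b c d :: int
  assumes ne: "c\<noteq>a" "d\<noteq>b" "c-d\<noteq>a-b" "c+d\<noteq>a+b"
  shows "card (attacks (a,b) \<inter> attacks (c,d)) = (if even (a-b+c+d) then 12 else 10)"
proof (cases "even (a-b+c+d)")
  case True
  then obtain k where k: "a-b+c+d = 2*k" by (rule dvdE)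
  have D1: "{p. fst p - snd p = a-b \<and> fst p + snd p = c+d} = {(k, k-a+b)}"
  proof (rule set_eqI)
    fix p :: "int \<times> int" obtain x y where p: "p = (x,y)" by force
    show "p \<in> {p. fst p - snd p = a-b \<and> fst p + snd p = c+d} \<longleftrightarrow> p \<in> {(k, k-a+b)}"
      unfolding p using k by auto
  qed
  have D2: "{p. fst p - snd p = c-d \<and> fst p + snd p = a+b} = {(k+b-d, a+d-k)}"
  proof (rule set_eqI)
    fix p :: "int \<times> int" obtain x y where p: "p = (x,y)" by force
    show "p \<in> {p. fst p - snd p = c-d \<and> fst p + snd p = a+b} \<longleftrightarrow> p \<in> {(k+b-d, a+d-k)}"
      unfolding p using k by auto
  qed
  have "attacks (a,b) \<inter> attacks (c,d) = set (pts10 a b c d @ [(k, k-a+b), (k+b-d, a+d-k)])"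
    unfolding inter_set[OF ne] D1 D2 by auto
  then have "card (attacks (a,b) \<inter> attacks (c,d)) = length (pts10 a b c d @ [(k, k-a+b), (k+b-d, a+d-k)])"
    using distinct_card[OF dist12[OF ne k]] by simp
  then show ?thesis using True by (simp add: pts10_def)
next
  case False
  have D1: "{p. fst p - snd p = a-b \<and> fst p + snd p = c+d} = {}"
  proof -
    have False if "x - y = a-b" "x+y = c+d" for x y :: int
    proof -
      have "a-b+c+d = 2*x" using that by linarith
      then show False using False by (metis dvd_triv_left)
    qed
    then show ?thesis by auto
  qed
  have D2: "{p. fst p - snd p = c-d \<and> fst p + snd p = a+b} = {}"
  proof -
    have False if "x - y = c-d" "x+y = a+b" for x y :: int
    proof -
      have "a-b+c+d = 2*x - 2*b + 2*d" using that by linarith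
      then have "a-b+c+d = 2*(x-b+d)" by simp
      then show False using False by (metis dvd_triv_left)
    qed
    then show ?thesis by auto
  qed
  have "card (attacks (a,b) \<inter> attacks (c,d)) = length (pts10 a b c d)"
    unfolding inter_set[OF ne] D1 D2 using distinct_card[OF dist10[OF ne]] by simp
  then show ?thesis using False by (simp add: pts10_def)
qed

definition wt :: "point \<Rightarrow> point \<Rightarrow> int" where
  "wt Q Q' = (if even_queen Q = even_queen Q' then 12 else 10)"

lemma ne_of_nonatt:
  assumes "non_attacking C" "(a,b) \<in> C" "(c,d) \<in> C" "(a,b) \<noteq> (c,d)"
  shows "c\<noteq>a" "d\<noteq>b" "c-d\<noteq>a-b" "c+d\<noteq>a+b"
proof -
  have "(c,d) \<notin> attacks (a,b)" using assms unfolding non_attacking_def by blast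
  then show "c\<noteq>a" "d\<noteq>b" "c-d\<noteq>a-b" "c+d\<noteq>a+b" using assms(4) unfolding attacks_iff by auto
qed

lemma pair_w:
  assumes "non_attacking C" "Q \<in> C" "Q' \<in> C" "Q \<noteq> Q'"
  shows "int (card (attacks Q \<inter> attacks Q')) = wt Q Q'"
proof -
  obtain a b c d where Q: "Q = (a,b)" and Q': "Q' = (c,d)" by force
  note ne = ne_of_nonatt[OF assms(1) assms(2)[unfolded Q] assms(3)[unfolded Q'] assms(4)[unfolded Q Q']]
  have par: "(even_queen (a,b) = even_queen (c,d)) \<longleftrightarrow> even (a-b+c+d)"
    unfolding even_queen_def fst_conv snd_conv by presburger
  show ?thesis unfolding Q Q' card_inter[OF ne] wt_def par by simp
qed

lemma pair_bound:
  assumes "non_attacking C" "Q \<in> C" "Q' \<in> C" "Q \<noteq> Q'"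
    and M: "\<bar>fst Q\<bar> \<le> M" "\<bar>snd Q\<bar> \<le> M" "\<bar>fst Q'\<bar> \<le> M" "\<bar>snd Q'\<bar> \<le> M"
    and p: "p \<in> attacks Q \<inter> attacks Q'"
  shows "\<bar>fst p\<bar> \<le> 3*M \<and> \<bar>snd p\<bar> \<le> 3*M"
proof -
  obtain a b c d where Q: "Q = (a,b)" and Q': "Q' = (c,d)" by force
  obtain x y where pp: "p = (x,y)" by force
  note ne = ne_of_nonatt[OF assms(1) assms(2)[unfolded Q] assms(3)[unfolded Q'] assms(4)[unfolded Q Q']]
  have Mb: "-M \<le> a" "a \<le> M" "-M \<le> b" "b \<le> M" "-M \<le> c" "c \<le> M" "-M \<le> d" "d \<le> M"
    using M unfolding Q Q' by auto
  have "(x,y) \<in> attacks (a,b)" "(x,y) \<in> attacks (c,d)" using p unfolding Q Q' pp by auto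
  then have h1: "x = a \<or> y = b \<or> x - y = a - b \<or> x + y = a + b" and h2: "x = c \<or> y = d \<or> x - y = c - d \<or> x + y = c + d"
    unfolding attacks_iff by auto
  have "-3*M \<le> x \<and> x \<le> 3*M \<and> -3*M \<le> y \<and> y \<le> 3*M"
    using fwd[OF ne h1 h2] by (elim disjE conjE; intro conjI; use Mb in linarith)
  then show ?thesis unfolding pp by auto
qed

lemma box_board:
  fixes x y M :: int
  assumes "\<bar>x\<bar> \<le> 3*M" "\<bar>y\<bar> \<le> 3*M" "6*M+2 \<le> int n"
  shows "(x,y) \<in> board n"
proof -
  have d1: "2*(int n div 2) \<ge> int n - 1" by presburger
  have d2: "2*((2 - int n) div 2) \<le> 2 - int n" by presburger
  show ?thesis unfolding board_def I_set_def using assms d1 d2 by auto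
qed

lemma ch2: "2 * int (k choose 2) = int k * (int k - 1)"
  by (induction k) (simp_all add: numeral_2_eq_2 algebra_simps)

lemma sq_count:
  assumes fin: "finite C"
  shows "2 * int (attacking_number C s choose 2) =
    (\<Sum>Q\<in>C. \<Sum>Q'\<in>C-{Q}. of_bool (s \<in> attacks Q) * of_bool (s \<in> attacks Q'))"
proof -
  define ind where "ind Q = (of_bool (s \<in> attacks Q) :: int)" for Q
  define a where "a = int (attacking_number C s)"
  have a: "a = (\<Sum>Q\<in>C. ind Q)"
    unfolding a_def ind_def attacking_number_def using fin by (simp add: Int_def conj_commute)
  have inner: "(\<Sum>Q'\<in>C-{Q}. ind Q * ind Q') = ind Q * (a - ind Q)" if "Q \<in> C" for Q
    using that fin by (simp add: sum_distrib_left[symmetric] sum_diff1 a)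
  have sq: "ind Q * ind Q = ind Q" for Q unfolding ind_def by simp
  have "(\<Sum>Q\<in>C. \<Sum>Q'\<in>C-{Q}. ind Q * ind Q') = (\<Sum>Q\<in>C. a * ind Q - ind Q)"
    by (rule sum.cong[OF refl]) (simp add: inner algebra_simps sq)
  also have "\<dots> = a * a - a" by (simp add: sum_subtractf sum_distrib_left[symmetric] a)
  finally have "(\<Sum>Q\<in>C. \<Sum>Q'\<in>C-{Q}. ind Q * ind Q') = a * (a - 1)" by (simp add: algebra_simps)
  then show ?thesis unfolding ch2 a_def ind_def by simp
qed

lemma weights:
  assumes fin: "finite C"
  shows "(\<Sum>Q\<in>C. \<Sum>Q'\<in>C-{Q}. wt Q Q') = 2 * gamma C"
proof -
  define Ev where "Ev = {Q \<in> C. even_queen Q}"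
  define Od where "Od = {Q \<in> C. \<not> even_queen Q}"
  define ce where "ce = card Ev"
  define co where "co = card Od"
  have fE: "finite Ev" "finite Od" using fin unfolding Ev_def Od_def by auto
  have inner: "(\<Sum>Q'\<in>C-{Q}. wt Q Q') = (if even_queen Q then 12 * (int ce - 1) + 10 * int co else 12 * (int co - 1) + 10 * int ce)"
    if Q: "Q \<in> C" for Q
  proof -
    have split: "(\<Sum>Q'\<in>C-{Q}. wt Q Q') = (\<Sum>Q'\<in>(C-{Q}) \<inter> {Q'. even_queen Q'}. wt Q Q') + (\<Sum>Q'\<in>(C-{Q}) \<inter> - {Q'. even_queen Q'}. wt Q Q')"
      using sum.Int_Diff[of "C-{Q}" "wt Q" "{Q'. even_queen Q'}"] fin by (simp add: Diff_eq)
    have s1: "(C-{Q}) \<inter> {Q'. even_queen Q'} = Ev - {Q}" unfolding Ev_def by auto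
    have s2: "(C-{Q}) \<inter> - {Q'. even_queen Q'} = Od - {Q}" unfolding Od_def by auto
    show ?thesis
    proof (cases "even_queen Q")
      case True
      have QE: "Q \<in> Ev" "Q \<notin> Od" using Q True unfolding Ev_def Od_def by auto
      have "(\<Sum>Q'\<in>Ev - {Q}. wt Q Q') = (\<Sum>Q'\<in>Ev - {Q}. 12)"
        by (rule sum.cong[OF refl]) (auto simp: wt_def Ev_def True)
      moreover have "(\<Sum>Q'\<in>Od - {Q}. wt Q Q') = (\<Sum>Q'\<in>Od - {Q}. 10)"
        by (rule sum.cong[OF refl]) (auto simp: wt_def Od_def True)
      moreover have "0 < card Ev" using QE fE card_gt_0_iff by blast
      then have "int (card (Ev - {Q})) = int ce - 1" using QE by (simp add: card_Diff_singleton ce_def of_nat_diff)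
      moreover have "Od - {Q} = Od" using QE by auto
      ultimately show ?thesis using True unfolding split s1 s2 co_def by simp
    next
      case False
      have QE: "Q \<notin> Ev" "Q \<in> Od" using Q False unfolding Ev_def Od_def by auto
      have "(\<Sum>Q'\<in>Ev - {Q}. wt Q Q') = (\<Sum>Q'\<in>Ev - {Q}. 10)"
        by (rule sum.cong[OF refl]) (auto simp: wt_def Ev_def False)
      moreover have "(\<Sum>Q'\<in>Od - {Q}. wt Q Q') = (\<Sum>Q'\<in>Od - {Q}. 12)"
        by (rule sum.cong[OF refl]) (auto simp: wt_def Od_def False)
      moreover have "0 < card Od" using QE fE card_gt_0_iff by blast
      then have "int (card (Od - {Q})) = int co - 1" using QE by (simp add: card_Diff_singleton co_def of_nat_diff)
      moreover have "Ev - {Q} = Ev" using QE by auto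
      ultimately show ?thesis using False unfolding split s1 s2 ce_def by simp
    qed
  qed
  have "(\<Sum>Q\<in>C. \<Sum>Q'\<in>C-{Q}. wt Q Q') = (\<Sum>Q\<in>C. if even_queen Q then 12 * (int ce - 1) + 10 * int co else 12 * (int co - 1) + 10 * int ce)"
    by (rule sum.cong[OF refl]) (simp add: inner)
  also have "\<dots> = int ce * (12 * (int ce - 1) + 10 * int co) + int co * (12 * (int co - 1) + 10 * int ce)"
  proof -
    have "C \<inter> {Q. even_queen Q} = Ev" "C \<inter> - {Q. even_queen Q} = Od" by (auto simp: Ev_def Od_def)
    then show ?thesis by (simp add: sum.If_cases[OF fin] ce_def co_def)
  qed
  also have "\<dots> = 12 * (int ce * (int ce - 1)) + 12 * (int co * (int co - 1)) + 20 * (int ce * int co)"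
    by (simp add: algebra_simps)
  also have "\<dots> = 2 * gamma C"
  proof -
    have g: "gamma C = 12 * int (ce choose 2) + 12 * int (co choose 2) + 10 * (int ce * int co)"
      unfolding gamma_def Let_def ce_def co_def Ev_def Od_def by simp
    show ?thesis unfolding g ch2[of ce, symmetric] ch2[of co, symmetric] by (simp add: algebra_simps)
  qed
  finally show ?thesis .
qed

lemma main_count:
  assumes fin: "finite C" and na: "non_attacking C"
  shows "\<exists>N. \<forall>n\<ge>N. (\<Sum>s\<in>attacked C \<inter> board n. int (attacking_number C s choose 2)) = gamma C"
proof -
  define M where "M = (\<Sum>Q\<in>C. \<bar>fst Q\<bar> + \<bar>snd Q\<bar>)"
  have MQ0: "\<bar>fst Q\<bar> + \<bar>snd Q\<bar> \<le> M" if "Q \<in> C" for Q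
    unfolding M_def by (rule member_le_sum[OF that _ fin]) simp
  have MQ: "\<bar>fst Q\<bar> \<le> M" "\<bar>snd Q\<bar> \<le> M" if "Q \<in> C" for Q
    using MQ0[OF that] by auto
  show ?thesis
  proof (intro exI allI impI)
    fix n assume "nat (6*M+2) \<le> n"
    then have nb: "6*M+2 \<le> int n" by linarith
    define S where "S = attacked C \<inter> board n"
    have finS: "finite S" unfolding S_def board_def I_set_def by simp
    have inS: "attacks Q \<inter> attacks Q' \<subseteq> S" if Q: "Q \<in> C" "Q' \<in> C" "Q \<noteq> Q'" for Q Q'
    proof
      fix p assume p: "p \<in> attacks Q \<inter> attacks Q'"
      have "p \<in> attacked C" using p Q unfolding attacked_def by auto
      moreover have "\<bar>fst p\<bar> \<le> 3*M \<and> \<bar>snd p\<bar> \<le> 3*M"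
        by (rule pair_bound[OF na Q MQ[OF Q(1)] MQ[OF Q(2)] p])
      then have "p \<in> board n" using box_board[of "fst p" M "snd p" n] nb by auto
      ultimately show "p \<in> S" unfolding S_def by auto
    qed
    have cnt: "(\<Sum>s\<in>S. (of_bool (s \<in> attacks Q) * of_bool (s \<in> attacks Q') :: int)) = wt Q Q'"
      if Q: "Q \<in> C" "Q' \<in> C - {Q}" for Q Q'
    proof -
      have QQ: "Q' \<in> C" "Q \<noteq> Q'" using Q by auto
      have "(\<Sum>s\<in>S. (of_bool (s \<in> attacks Q) * of_bool (s \<in> attacks Q') :: int))
          = (\<Sum>s\<in>S. of_bool (s \<in> attacks Q \<inter> attacks Q'))"
        by (rule sum.cong[OF refl]) simp
      also have "\<dots> = int (card (S \<inter> {s. s \<in> attacks Q \<inter> attacks Q'}))"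
        using finS by simp
      also have "S \<inter> {s. s \<in> attacks Q \<inter> attacks Q'} = attacks Q \<inter> attacks Q'"
        using inS[OF Q(1) QQ] by auto
      also have "int (card (attacks Q \<inter> attacks Q')) = wt Q Q'"
        by (rule pair_w[OF na Q(1) QQ])
      finally show ?thesis .
    qed
    have "2 * (\<Sum>s\<in>S. int (attacking_number C s choose 2))
        = (\<Sum>s\<in>S. 2 * int (attacking_number C s choose 2))"
      by (simp add: sum_distrib_left)
    also have "\<dots> = (\<Sum>s\<in>S. \<Sum>Q\<in>C. \<Sum>Q'\<in>C-{Q}. (of_bool (s \<in> attacks Q) * of_bool (s \<in> attacks Q') :: int))"
      by (rule sum.cong[OF refl]) (rule sq_count[OF fin])
    also have "\<dots> = (\<Sum>Q\<in>C. \<Sum>s\<in>S. \<Sum>Q'\<in>C-{Q}. (of_bool (s \<in> attacks Q) * of_bool (s \<in> attacks Q') :: int))"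
      by (rule sum.swap)
    also have "\<dots> = (\<Sum>Q\<in>C. \<Sum>Q'\<in>C-{Q}. \<Sum>s\<in>S. (of_bool (s \<in> attacks Q) * of_bool (s \<in> attacks Q') :: int))"
      by (rule sum.cong[OF refl]) (rule sum.swap)
    also have "\<dots> = (\<Sum>Q\<in>C. \<Sum>Q'\<in>C-{Q}. wt Q Q')"
      by (rule sum.cong[OF refl], rule sum.cong[OF refl]) (rule cnt)
    also have "\<dots> = 2 * gamma C" by (rule weights[OF fin])
    finally show "(\<Sum>s\<in>attacked C \<inter> board n. int (attacking_number C s choose 2)) = gamma C"
      unfolding S_def by simp
  qed
qed

lemma eta_eq:
  assumes "(\<Sum>s\<in>attacked C \<inter> board n. int (attacking_number C s choose 2)) = gamma C"
  shows "eta n C = gamma C - inloss n C"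
  unfolding eta_def inloss_def sum_subtractf assms ..

theorem mainTheorem8:
  fixes q :: nat and C C' :: "(int \<times> int) set"
  assumes "q_configuration q C" and "q_configuration q C'"
    and "non_attacking C" and "non_attacking C'"
  shows "\<exists>N::nat. \<forall>n\<ge>N. inloss n C = inloss n C' \<longrightarrow>
           gamma C' - gamma C = eta n C' - eta n C"
proof -
  have f: "finite C" "finite C'" using assms(1,2) unfolding q_configuration_def by auto
  obtain N1 where N1: "\<forall>n\<ge>N1. (\<Sum>s\<in>attacked C \<inter> board n. int (attacking_number C s choose 2)) = gamma C"
    using main_count[OF f(1) assms(3)] by blast
  obtain N2 where N2: "\<forall>n\<ge>N2. (\<Sum>s\<in>attacked C' \<inter> board n. int (attacking_number C' s choose 2)) = gamma C'"
    using main_count[OF f(2) assms(4)] by blast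
  show ?thesis
  proof (intro exI allI impI)
    fix n assume n: "max N1 N2 \<le> n" and il: "inloss n C = inloss n C'"
    have "eta n C = gamma C - inloss n C" using N1 n by (intro eta_eq) auto
    moreover have "eta n C' = gamma C' - inloss n C'" using N2 n by (intro eta_eq) auto
    ultimately show "gamma C' - gamma C = eta n C' - eta n C" using il by simp
  qed
qed

end
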